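(* Let $k_0>0$, $0<r_s<r_M$, $p>1$, $L>0$, $f\in L^p(\mathbb{R}^3)$ with $\operatorname{supp}(f)\subset\mathcal{B}_{r_s}$, $\alpha\in C^1[0,L]$ and $\mathbf n=(n_1,n_2,n_3)^\top\in C^1([0,L],\mathbb{S}^2)$. If $\mathbf n'(t)=\mathbf 0$ for all $t$ (i.e. $\mathbf n$ is constant), then for $(k_1,k_2,t)\in\mathcal U$ $$|\nabla T_\pm(k_1,k_2,t)|=\frac{k_0\,|\alpha'(t)|\,|n_2k_1-n_1k_2|}{\kappa}.$$ If in addition $\mathbf n\notin\{\mathbf e_3,-\mathbf e_3\}$ and $\alpha$ is strictly increasing with $\alpha(0)=0$ and $\alpha(L)=2\pi$, then $$\operatorname{Card}\big(T_\pm^{-1}(T_\pm(k_1,k_2,t))\big)=2$$ for almost every $(k_1,k_2,t)\in\mathcal U$.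
   Context: $\mathcal{B}_r$ is the open ball in $\mathbb{R}^3$ of radius $r$ about $0$; $\mathbb{S}^2$ the unit sphere; $\mathbf e_3=(0,0,1)^\top$. For a unit vector $\mathbf n$ and angle $\alpha$, $R_{\mathbf n,\alpha}\mathbf y=(1-\cos\alpha)(\mathbf n\cdot\mathbf y)\mathbf n+\cos\alpha\,\mathbf y-\sin\alpha\,(\mathbf n\times\mathbf y)$. $\kappa=\kappa(k_1,k_2)=\sqrt{k_0^2-k_1^2-k_2^2}$. $\mathcal U=\{(k_1,k_2,t):k_1^2+k_2^2<k_0^2,\ 0\le t\le L\}$, $T_\pm(k_1,k_2,t)=R_{\mathbf n(t),\alpha(t)}(k_1,k_2,\pm\kappa-k_0)^\top$, $|\nabla T_\pm|$ is the absolute Jacobian determinant of $T_\pm$ in $(k_1,k_2,t)$, and $\operatorname{Card}(T_\pm^{-1}(\mathbf y))$ is the number of points of $\mathcal U$ mapped by $T_\pm$ to $\mathbf y$. *)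

theory Defs
  imports "HOL-Analysis.Analysis"
begin

definition rot :: "real^3 \<Rightarrow> real \<Rightarrow> real^3 \<Rightarrow> real^3" where
  "rot n a y = ((1 - cos a) * (n \<bullet> y)) *\<^sub>R n + cos a *\<^sub>R y - sin a *\<^sub>R cross3 n y"

definition kappa :: "real \<Rightarrow> real \<Rightarrow> real \<Rightarrow> real" where
  "kappa k0 k1 k2 = sqrt (k0^2 - k1^2 - k2^2)"

text \<open>The set U of points (k1,k2,t), encoded as vectors v with v$1 = k1, v$2 = k2, v$3 = t.\<close>
definition UU :: "real \<Rightarrow> real \<Rightarrow> (real^3) set" where
  "UU k0 L = {v. (v$1)^2 + (v$2)^2 < k0^2 \<and> 0 \<le> v$3 \<and> v$3 \<le> L}"

text \<open>T_s for s = 1 (T_+) and s = -1 (T_-).\<close>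
definition TT :: "real \<Rightarrow> (real \<Rightarrow> real^3) \<Rightarrow> (real \<Rightarrow> real) \<Rightarrow> real \<Rightarrow> real^3 \<Rightarrow> real^3" where
  "TT k0 n \<alpha> s v = rot (n (v$3)) (\<alpha> (v$3))
      (vector [v$1, v$2, s * kappa k0 (v$1) (v$2) - k0])"

definition e3 :: "real^3" where "e3 = vector [0, 0, 1]"

end

theory Submission
  imports Defs
begin


definition UF :: "real^3 \<Rightarrow> real^3" where "UF m = axis 3 1 - (m$3) *\<^sub>R m"
definition WF :: "real^3 \<Rightarrow> real^3" where "WF m = cross3 m (axis 3 1)"

lemma vec3_cases: obtains a b c where "(x::real^3) = vector [a, b, c]"
proof -
  have "x = vector [x$1, x$2, x$3]" by (simp add: vec_eq_iff forall_3 vector_3)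
  then show ?thesis using that by blast
qed

lemma unit3: "norm (m::real^3) = 1 \<Longrightarrow> (m$1)^2 + (m$2)^2 + (m$3)^2 = 1"
  by (simp add: norm_eq_sqrt_inner inner_vec_def sum_3 power2_eq_square)

lemma rot_inner_m:
  assumes "(m$1)^2 + (m$2)^2 + (m$3)^2 = 1"
  shows "rot m a y \<bullet> m = y \<bullet> m"
proof -
  obtain m1 m2 m3 where m: "m = vector [m1, m2, m3]" by (rule vec3_cases)
  obtain y1 y2 y3 where y: "y = vector [y1, y2, y3]" by (rule vec3_cases)
  show ?thesis using assms unfolding m y rot_def
    by (simp add: cross3_def inner_vec_def sum_3) algebra
qed

lemma rot_inner_U:
  assumes "(m$1)^2 + (m$2)^2 + (m$3)^2 = 1"
  shows "rot m a y \<bullet> UF m = cos a * (y \<bullet> UF m) + sin a * (y \<bullet> WF m)"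
proof -
  obtain m1 m2 m3 where m: "m = vector [m1, m2, m3]" by (rule vec3_cases)
  obtain y1 y2 y3 where y: "y = vector [y1, y2, y3]" by (rule vec3_cases)
  show ?thesis using assms unfolding m y rot_def UF_def WF_def
    by (simp add: cross3_def inner_vec_def sum_3 axis_def) algebra
qed

lemma rot_inner_W:
  assumes "(m$1)^2 + (m$2)^2 + (m$3)^2 = 1"
  shows "rot m a y \<bullet> WF m = cos a * (y \<bullet> WF m) - sin a * (y \<bullet> UF m)"
proof -
  obtain m1 m2 m3 where m: "m = vector [m1, m2, m3]" by (rule vec3_cases)
  obtain y1 y2 y3 where y: "y = vector [y1, y2, y3]" by (rule vec3_cases)
  show ?thesis using assms unfolding m y rot_def UF_def WF_def
    by (simp add: cross3_def inner_vec_def sum_3 axis_def) algebra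
qed

lemma rot_comp:
  assumes "(m$1)^2 + (m$2)^2 + (m$3)^2 = 1"
  shows "rot m b (rot m c y) = rot m (b + c) y"
proof -
  obtain m1 m2 m3 where m: "m = vector [m1, m2, m3]" by (rule vec3_cases)
  obtain y1 y2 y3 where y: "y = vector [y1, y2, y3]" by (rule vec3_cases)
  show ?thesis using assms unfolding m y rot_def
    by (simp add: cross3_def inner_vec_def sum_3 vec_eq_iff forall_3 cos_add sin_add) algebra
qed

lemma rot_zero: "rot m 0 y = y"
  by (simp add: rot_def)

lemma rot_norm:
  assumes "(m$1)^2 + (m$2)^2 + (m$3)^2 = 1"
  shows "rot m a y \<bullet> rot m a y = y \<bullet> y"
proof -
  obtain m1 m2 m3 where m: "m = vector [m1, m2, m3]" by (rule vec3_cases)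
  obtain y1 y2 y3 where y: "y = vector [y1, y2, y3]" by (rule vec3_cases)
  show ?thesis using assms unfolding m y rot_def
    apply (simp add: cross3_def inner_vec_def sum_3)
    apply (insert sin_cos_squared_add[of a])
    apply algebra
    done
qed

lemma frame_eq:
  assumes "(m$1)^2 + (m$2)^2 \<noteq> 0"
    and "x \<bullet> m = y \<bullet> m" "x \<bullet> UF m = y \<bullet> UF m" "x \<bullet> WF m = y \<bullet> WF m"
  shows "x = y"
proof -
  obtain m1 m2 m3 where m: "m = vector [m1, m2, m3]" by (rule vec3_cases)
  obtain y1 y2 y3 where y: "y = vector [y1, y2, y3]" by (rule vec3_cases)
  obtain x1 x2 x3 where x: "x = vector [x1, x2, x3]" by (rule vec3_cases)
  have h1: "m1^2 + m2^2 \<noteq> 0" using assms(1) unfolding m by simp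
  have h: "m1 * x1 + m2 * x2 + m3 * x3 = m1 * y1 + m2 * y2 + m3 * y3"
    "x3 - m3 * (m1 * x1 + m2 * x2 + m3 * x3) = y3 - m3 * (m1 * y1 + m2 * y2 + m3 * y3)"
    "m2 * x1 - m1 * x2 = m2 * y1 - m1 * y2"
    using assms unfolding m y x UF_def WF_def
    by (simp_all add: cross3_def inner_vec_def sum_3 axis_def) (algebra)+
  have 3: "x3 = y3" using h(1,2) by algebra
  have e1: "m1 * (x1 - y1) + m2 * (x2 - y2) = 0" using h(1) 3 by algebra
  have e2: "m2 * (x1 - y1) - m1 * (x2 - y2) = 0" using h(3) by algebra
  have "(m1^2 + m2^2) * (x1 - y1) = 0"
    using e1 e2 by algebra
  then have 1: "x1 = y1" using h1 by auto
  have "(m1^2 + m2^2) * (x2 - y2) = 0"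
    using e1 e2 by algebra
  then have 2: "x2 = y2" using h1 by auto
  show ?thesis unfolding x y using 1 2 3 by simp
qed

lemma frame_facts:
  assumes "(m$1)^2 + (m$2)^2 + (m$3)^2 = 1"
  shows "m \<bullet> UF m = 0" "m \<bullet> WF m = 0" "UF m \<bullet> WF m = 0"
    "UF m \<bullet> UF m = (m$1)^2 + (m$2)^2" "WF m \<bullet> WF m = (m$1)^2 + (m$2)^2"
    "y \<bullet> WF m = m$2 * y$1 - m$1 * y$2"
    "y $ 3 = (m$3) * (y \<bullet> m) + y \<bullet> UF m"
  using assms
  by (simp_all add: UF_def WF_def cross3_def inner_vec_def sum_3 axis_def algebra_simps power2_eq_square)
     (simp_all only: power2_eq_square[symmetric], algebra+)

lemma decomp:
  assumes "(m$1)^2 + (m$2)^2 + (m$3)^2 = 1"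
  shows "((m$1)^2 + (m$2)^2) *\<^sub>R y = (((m$1)^2 + (m$2)^2) * (y \<bullet> m)) *\<^sub>R m + (y \<bullet> UF m) *\<^sub>R UF m + (y \<bullet> WF m) *\<^sub>R WF m"
proof -
  obtain m1 m2 m3 where m: "m = vector [m1, m2, m3]" by (rule vec3_cases)
  obtain y1 y2 y3 where y: "y = vector [y1, y2, y3]" by (rule vec3_cases)
  show ?thesis using assms unfolding m y UF_def WF_def
    by (simp add: cross3_def inner_vec_def sum_3 vec_eq_iff forall_3 axis_def) algebra
qed



lemma half_identity:
  fixes p q th :: real
  shows "p * cos (2*th) + q * sin (2*th) - p = 2 * sin th * (q * cos th - p * sin th)"
proof -
  have c: "cos (2*th) = 1 - 2 * sin th ^ 2" by (rule cos_double_sin)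
  have s: "sin (2*th) = 2 * sin th * cos th" by (rule sin_double)
  show ?thesis unfolding c s by (simp add: algebra_simps power2_eq_square)
qed

lemma trig_two:
  fixes a p q :: real
  assumes a: "0 < a" "a < 2*pi" and q: "q \<noteq> 0" and nb: "p * (cos a - 1) + q * sin a \<noteq> 0"
  shows "\<exists>b2. 0 < b2 \<and> b2 < 2*pi \<and> b2 \<noteq> a \<and>
     (\<forall>b. 0 \<le> b \<and> b \<le> 2*pi \<longrightarrow> (p * cos (a - b) + q * sin (a - b) = p \<longleftrightarrow> b = a \<or> b = b2))"
proof -
  define g where "g = (\<lambda>th::real. q * cos th - p * sin th)"
  have id: "p * cos (a - b) + q * sin (a - b) - p = 2 * sin ((a-b)/2) * g ((a-b)/2)" for b
  proof -
    have e: "2 * ((a-b)/2) = a - b" by simp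
    show ?thesis using half_identity[where p=p and q=q and th="(a-b)/2"] unfolding e by (simp add: g_def)
  qed
  have ga: "g (a/2) \<noteq> 0" using id[of 0] nb by (auto simp: algebra_simps)
  have gb: "g (a/2 - pi) = - g (a/2)" by (simp add: g_def cos_diff sin_diff)
  have cont: "continuous_on {a/2 - pi .. a/2} g" unfolding g_def by (intro continuous_intros)
  obtain th2 where th2: "a/2 - pi \<le> th2" "th2 \<le> a/2" "g th2 = 0"
  proof (cases "g (a/2) > 0")
    case True
    then show ?thesis using IVT'[of g "a/2 - pi" 0 "a/2"] cont gb that by force
  next
    case False
    then have "g (a/2) < 0" using ga by simp
    then show ?thesis using IVT2'[of g "a/2" 0 "a/2 - pi"] cont gb that by force
  qed
  have th2': "a/2 - pi < th2" "th2 < a/2"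
    using th2 ga gb by (auto simp: le_less)
  have th20: "th2 \<noteq> 0" using th2(3) q by (auto simp: g_def)
  define b2 where "b2 = a - 2 * th2"
  have uniq: "th = th2" if "a/2 - pi \<le> th" "th \<le> a/2" "g th = 0" for th
  proof -
    have e1: "q * cos th = p * sin th" using that(3) by (simp add: g_def)
    have e2: "q * cos th2 = p * sin th2" using th2(3) by (simp add: g_def)
    have "q * sin (th - th2) = sin th * (q * cos th2) - (q * cos th) * sin th2"
      by (simp add: sin_diff algebra_simps)
    also have "\<dots> = 0" unfolding e1 e2 by simp
    finally have "q * sin (th - th2) = 0" .
    then have "sin (th - th2) = 0" using q by simp
    moreover have "- pi < th - th2" "th - th2 < pi" using that th2' by auto
    ultimately show ?thesis using sin_eq_0_pi by force
  qed
  show ?thesis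
  proof (intro exI[of _ b2] conjI allI impI)
    show "0 < b2" "b2 < 2*pi" "b2 \<noteq> a" using th2' th20 by (auto simp: b2_def)
    fix b assume b: "0 \<le> b \<and> b \<le> 2*pi"
    have rng: "a/2 - pi \<le> (a-b)/2" "(a-b)/2 \<le> a/2" using b by auto
    show "p * cos (a - b) + q * sin (a - b) = p \<longleftrightarrow> b = a \<or> b = b2"
    proof
      assume "p * cos (a - b) + q * sin (a - b) = p"
      then have "sin ((a-b)/2) = 0 \<or> g ((a-b)/2) = 0" using id[of b] by simp
      then show "b = a \<or> b = b2"
      proof
        assume "sin ((a-b)/2) = 0"
        moreover have "- pi < (a-b)/2" "(a-b)/2 < pi" using b a by auto
        ultimately have "(a-b)/2 = 0" using sin_eq_0_pi by blast
        then show ?thesis by simp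
      next
        assume "g ((a-b)/2) = 0"
        then have "(a-b)/2 = th2" using uniq rng by blast
        then show ?thesis by (simp add: b2_def)
      qed
    next
      assume "b = a \<or> b = b2"
      then show "p * cos (a - b) + q * sin (a - b) = p"
      proof
        assume "b = a" then show ?thesis by simp
      next
        assume "b = b2"
        then have "(a-b)/2 = th2" by (simp add: b2_def)
        then show ?thesis using id[of b] th2(3) by simp
      qed
    qed
  qed
qed


lemma det_formula:
  fixes m :: "real^3" and a' k0 k1 k2 q s S C kk :: real
  assumes nm: "(m$1)^2 + (m$2)^2 + (m$3)^2 = 1"
    and sc: "S^2 + C^2 = 1"
    and kq: "kk * q = 1" and kk: "kk^2 = k0^2 - k1^2 - k2^2" and s2: "s^2 = 1"
  shows "det (matrix (\<lambda>h::real^3. (S * (a' * h$3) * (m \<bullet> vector [k1, k2, s*kk - k0]) + (1 - C) * (m \<bullet> vector [h$1, h$2, - s * (k1 * h$1 + k2 * h$2) * q])) *\<^sub>R m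
        + (C *\<^sub>R vector [h$1, h$2, - s * (k1 * h$1 + k2 * h$2) * q] - (S * (a' * h$3)) *\<^sub>R vector [k1, k2, s*kk - k0])
        - (S *\<^sub>R cross3 m (vector [h$1, h$2, - s * (k1 * h$1 + k2 * h$2) * q]) + (C * (a' * h$3)) *\<^sub>R cross3 m (vector [k1, k2, s*kk - k0]))))
     = s * k0 * a' * (m$2 * k1 - m$1 * k2) * q"
proof -
  have m: "m = vector [m$1,m$2,m$3]"
    by (simp add: vec_eq_iff forall_3 vector_3)
  define m1 where "m1 = m$1"
  define m2 where "m2 = m$2"
  define m3 where "m3 = m$3"
  have m': "m = vector [m1,m2,m3]" using m by (simp add: m1_def m2_def m3_def)
  have nm2: "m1^2 + m2^2 + m3^2 = 1" using nm by (simp add: m1_def m2_def m3_def)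
  show ?thesis
  unfolding m1_def[symmetric] m2_def[symmetric]
  using nm2 sc kq kk s2 unfolding m'
  apply (simp add: matrix_def det_3 cross3_def inner_vec_def sum_3 axis_def)
  apply algebra
  done
qed

lemma Y_eq: "vector [a, b, c] = a *\<^sub>R axis 1 1 + b *\<^sub>R axis 2 1 + c *\<^sub>R (axis 3 1 :: real^3)"
  by (simp add: vec_eq_iff forall_3 axis_def)

lemma part1:
  fixes \<alpha> \<alpha>' :: "real \<Rightarrow> real" and n :: "real \<Rightarrow> real^3" and m :: "real^3"
  assumes k0: "k0 > 0" and s: "s \<in> {1, -1}"
    and \<alpha>_deriv: "\<And>t. t \<in> {0..L} \<Longrightarrow> (\<alpha> has_real_derivative \<alpha>' t) (at t within {0..L})"
    and nc: "\<And>t. t \<in> {0..L} \<Longrightarrow> n t = m" and nm: "norm m = 1"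
    and v: "v \<in> UU k0 L"
  shows "\<exists>D. (TT k0 n \<alpha> s has_derivative D) (at v within UU k0 L) \<and>
                \<bar>det (matrix D)\<bar> =
                  k0 * \<bar>\<alpha>' (v$3)\<bar> * \<bar>(n (v$3))$2 * v$1 - (n (v$3))$1 * v$2\<bar>
                  / kappa k0 (v$1) (v$2)"
proof -
  define k1 where "k1 = v$1"
  define k2 where "k2 = v$2"
  define t where "t = v$3"
  define kk where "kk = kappa k0 k1 k2"
  define q where "q = 1 / kk"
  define a where "a = \<alpha> t"
  define a' where "a' = \<alpha>' t"
  define y where "y = (vector [k1, k2, s*kk - k0] :: real^3)"
  define DY where "DY = (\<lambda>h::real^3. vector [h$1, h$2, - s * (k1 * h$1 + k2 * h$2) * q] :: real^3)"
  define D where "D = (\<lambda>h::real^3. (sin a * (a' * h$3) * (m \<bullet> y) + (1 - cos a) * (m \<bullet> DY h)) *\<^sub>R m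
        + (cos a *\<^sub>R DY h - (sin a * (a' * h$3)) *\<^sub>R y)
        - (sin a *\<^sub>R cross3 m (DY h) + (cos a * (a' * h$3)) *\<^sub>R cross3 m y))"
  have vU: "k1^2 + k2^2 < k0^2" "0 \<le> t" "t \<le> L" using v by (auto simp: UU_def k1_def k2_def t_def)
  have kpos: "k0^2 - k1^2 - k2^2 > 0" using vU by simp
  have kk_pos: "kk > 0" using kpos by (simp add: kk_def kappa_def)
  have kk2: "kk^2 = k0^2 - k1^2 - k2^2" using kpos by (simp add: kk_def kappa_def)
  have nm': "(m$1)^2 + (m$2)^2 + (m$3)^2 = 1"
    using nm by (simp add: norm_eq_sqrt_inner inner_vec_def sum_3 power2_eq_square)
  have s2: "s^2 = 1" using s by auto
  have det: "det (matrix D) = s * k0 * a' * (m$2 * k1 - m$1 * k2) * q"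
    unfolding D_def DY_def y_def
    by (rule det_formula[OF nm' sin_cos_squared_add]) (use kk_pos kk2 s2 in \<open>auto simp: q_def\<close>)
  have lin_cross: "bounded_linear (cross3 m)"
    using bilinear_cross by (simp add: bilinear_def linear_conv_bounded_linear)
  have dA: "((\<lambda>w::real^3. \<alpha> (w$3)) has_derivative (\<lambda>h. a' * h$3)) (at v within UU k0 L)"
  proof -
    have 1: "((\<lambda>w::real^3. w$3) has_derivative (\<lambda>h. h$3)) (at v within UU k0 L)"
      by (rule bounded_linear.has_derivative[OF bounded_linear_vec_nth]) (rule has_derivative_ident)
    have 2: "(\<alpha> has_derivative (\<lambda>x. a' * x)) (at t within {0..L})"
      using \<alpha>_deriv[of t] vU by (simp add: has_field_derivative_def a'_def)
    have 3: "(\<lambda>w::real^3. w$3) ` UU k0 L \<subseteq> {0..L}" by (auto simp: UU_def)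
    show ?thesis
      by (rule has_derivative_in_compose[OF 1, of \<alpha>]) (use has_derivative_subset[OF 2 3] in \<open>simp add: t_def\<close>)
  qed
  have dK: "((\<lambda>w::real^3. kappa k0 (w$1) (w$2)) has_derivative (\<lambda>h. - (k1 * h$1 + k2 * h$2) * q)) (at v within UU k0 L)"
  proof -
    have inner: "((\<lambda>x::real^3. k0^2 - (x$1)^2 - (x$2)^2) has_derivative (\<lambda>h. -(2*k1*h$1 + 2*k2*h$2))) (at v within UU k0 L)"
      apply (rule has_derivative_eq_rhs)
       apply (rule derivative_intros bounded_linear.has_derivative[OF bounded_linear_vec_nth])+
      apply (simp add: fun_eq_iff k1_def k2_def)
      done
    have kp: "0 < k0^2 - (v$1)^2 - (v$2)^2" using kpos by (simp add: k1_def k2_def)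
    have der: "((\<lambda>x::real^3. sqrt (k0^2 - (x$1)^2 - (x$2)^2)) has_derivative (\<lambda>h. -(2*k1*h$1 + 2*k2*h$2) * (inverse (sqrt (k0^2 - (v$1)^2 - (v$2)^2)) / 2))) (at v within UU k0 L)"
      by (rule DERIV_compose_FDERIV[OF DERIV_real_sqrt[OF kp] inner])
    have sq: "sqrt (k0\<^sup>2 - ((v $ 1)\<^sup>2 + (v $ 2)\<^sup>2)) \<noteq> 0" using kp by (simp add: algebra_simps)
    show ?thesis
      unfolding kappa_def
      by (rule has_derivative_eq_rhs[OF der]) (use sq in \<open>simp add: fun_eq_iff q_def kk_def kappa_def k1_def k2_def field_simps\<close>)
  qed
  define Yf where "Yf = (\<lambda>w::real^3. vector [w$1, w$2, s * kappa k0 (w$1) (w$2) - k0] :: real^3)"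
  have dY: "(Yf has_derivative DY) (at v within UU k0 L)"
  proof -
    have "((\<lambda>w::real^3. (w$1) *\<^sub>R axis 1 1 + (w$2) *\<^sub>R axis 2 1 + (s * kappa k0 (w$1) (w$2) - k0) *\<^sub>R (axis 3 1::real^3))
       has_derivative (\<lambda>h. (h$1) *\<^sub>R axis 1 1 + (h$2) *\<^sub>R axis 2 1 + (- s * (k1 * h$1 + k2 * h$2) * q) *\<^sub>R (axis 3 1::real^3))) (at v within UU k0 L)"
      apply (rule has_derivative_eq_rhs)
       apply (rule dK derivative_intros bounded_linear.has_derivative[OF bounded_linear_vec_nth])+
      apply (simp add: fun_eq_iff algebra_simps)
      done
    then show ?thesis unfolding Yf_def DY_def Y_eq[symmetric] by simp
  qed
  have dC: "((\<lambda>w. cross3 m (Yf w)) has_derivative (\<lambda>h. cross3 m (DY h))) (at v within UU k0 L)"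
    by (rule bounded_linear.has_derivative[OF lin_cross dY])
  have Yv: "Yf v = y" by (simp add: Yf_def y_def kk_def k1_def k2_def)
  have dF: "((\<lambda>w. rot m (\<alpha> (w$3)) (Yf w)) has_derivative D) (at v within UU k0 L)"
    unfolding rot_def
    apply (rule has_derivative_eq_rhs)
     apply (rule dA dY dC derivative_intros)+
    apply (simp add: D_def fun_eq_iff Yv a_def t_def algebra_simps)
    done
  have dT: "(TT k0 n \<alpha> s has_derivative D) (at v within UU k0 L)"
    by (rule has_derivative_transform_within[OF dF zero_less_one v]) (auto simp: TT_def Yf_def UU_def nc)
  have "\<bar>det (matrix D)\<bar> = k0 * \<bar>\<alpha>' (v$3)\<bar> * \<bar>(n (v$3))$2 * v$1 - (n (v$3))$1 * v$2\<bar> / kappa k0 (v$1) (v$2)"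
    unfolding det using s kk_pos k0 vU
    by (auto simp: abs_mult q_def kk_def k1_def k2_def a'_def t_def nc)
  with dT show ?thesis by blast
qed


definition Yv :: "real \<Rightarrow> real \<Rightarrow> real^3 \<Rightarrow> real^3" where
  "Yv k0 s w = vector [w$1, w$2, s * kappa k0 (w$1) (w$2) - k0]"

lemma Yv_comp: "Yv k0 s w $ 1 = w$1" "Yv k0 s w $ 2 = w$2" "Yv k0 s w $ 3 = s * kappa k0 (w$1) (w$2) - k0"
  by (simp_all add: Yv_def)

lemma S_mem:
  assumes "w \<in> UU k0 L" "s \<in> {1, -1}"
  shows "Yv k0 s w \<bullet> Yv k0 s w + 2 * k0 * (Yv k0 s w $ 3) = 0"
proof -
  have p: "k0^2 - (w$1)^2 - (w$2)^2 > 0" using assms(1) by (simp add: UU_def)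
  then have kk: "(kappa k0 (w$1) (w$2))^2 = k0^2 - (w$1)^2 - (w$2)^2" by (simp add: kappa_def)
  have s2: "s^2 = 1" using assms(2) by auto
  show ?thesis unfolding Yv_def using kk s2
    by (simp add: inner_vec_def sum_3 power2_eq_square algebra_simps) algebra
qed

lemma TT_eq:
  assumes "w \<in> UU k0 L" "\<And>t. t \<in> {0..L} \<Longrightarrow> n t = m"
  shows "TT k0 n \<alpha> s w = rot m (\<alpha> (w$3)) (Yv k0 s w)"
  using assms by (simp add: TT_def Yv_def UU_def)

lemma card_good:
  fixes m :: "real^3" and \<alpha> :: "real \<Rightarrow> real" and n :: "real \<Rightarrow> real^3"
  assumes m1: "(m$1)^2+(m$2)^2+(m$3)^2 = 1" and sg: "(m$1)^2 + (m$2)^2 \<noteq> 0"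
    and k0: "k0 > 0" and s: "s \<in> {1, -1}"
    and nc: "\<And>t. t \<in> {0..L} \<Longrightarrow> n t = m"
    and mono: "strict_mono_on {0..L} \<alpha>" and a0: "\<alpha> 0 = 0" and aL: "\<alpha> L = 2 * pi"
    and cont: "continuous_on {0..L} \<alpha>"
    and v: "v \<in> UU k0 L" and vt: "0 < v$3" "v$3 < L"
    and q: "Yv k0 s v \<bullet> WF m \<noteq> 0"
    and nb: "(Yv k0 s v \<bullet> UF m) * (cos (\<alpha> (v$3)) - 1) + (Yv k0 s v \<bullet> WF m) * sin (\<alpha> (v$3)) \<noteq> 0"
  shows "card {w \<in> UU k0 L. TT k0 n \<alpha> s w = TT k0 n \<alpha> s v} = 2"
proof -
  define y where "y = Yv k0 s v"
  define p where "p = y \<bullet> UF m"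
  define qq where "qq = y \<bullet> WF m"
  define a where "a = \<alpha> (v$3)"
  define P where "P = {w \<in> UU k0 L. TT k0 n \<alpha> s w = TT k0 n \<alpha> s v}"
  have L: "0 < L" using vt by simp
  have a_rng: "0 < a" "a < 2*pi"
    using strict_mono_onD[OF mono, of 0 "v$3"] strict_mono_onD[OF mono, of "v$3" L] vt a0 aL
    by (auto simp: a_def)
  have qq0: "qq \<noteq> 0" using q by (simp add: qq_def y_def)
  have nb': "p * (cos a - 1) + qq * sin a \<noteq> 0" using nb by (simp add: p_def qq_def y_def a_def)
  obtain b2 where b2: "0 < b2" "b2 < 2*pi" "b2 \<noteq> a"
    and sol: "\<And>b. 0 \<le> b \<Longrightarrow> b \<le> 2*pi \<Longrightarrow> (p * cos (a - b) + qq * sin (a - b) = p \<longleftrightarrow> b = a \<or> b = b2)"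
    using trig_two[OF a_rng qq0 nb'] by blast
  obtain t2 where t2: "0 \<le> t2" "t2 \<le> L" "\<alpha> t2 = b2"
    using IVT'[of \<alpha> 0 b2 L] cont a0 aL b2 L by auto
  have inj: "x = z" if "x \<in> {0..L}" "z \<in> {0..L}" "\<alpha> x = \<alpha> z" for x z
    using strict_mono_on_imp_inj_on[OF mono] that by (auto dest: inj_onD)
  have vmem: "v$3 \<in> {0..L}" using vt by auto
  have t2ne: "t2 \<noteq> v$3" using t2 b2 by (auto simp: a_def)
  have arng: "\<alpha> x \<in> {0..2*pi}" if "x \<in> {0..L}" for x
  proof -
    have "\<alpha> 0 \<le> \<alpha> x" using that strict_mono_onD[OF mono, of 0 x] by (cases "x = 0") force+
    moreover have "\<alpha> x \<le> \<alpha> L" using that strict_mono_onD[OF mono, of x L] by (cases "x = L") force+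
    ultimately show ?thesis using a0 aL by auto
  qed
  have y3: "x $ 3 = y $ 3" if "x \<bullet> m = y \<bullet> m" "x \<bullet> UF m = y \<bullet> UF m" for x
    using frame_facts(7)[OF m1, of x] frame_facts(7)[OF m1, of y] that by simp
  have Sy: "y \<bullet> y + 2 * k0 * (y $ 3) = 0" unfolding y_def by (rule S_mem[OF v s])
  have pre: "\<alpha> (w$3) = a \<or> \<alpha> (w$3) = b2" and pre2: "Yv k0 s w = rot m (a - \<alpha> (w$3)) y"
    if w: "w \<in> P" for w
  proof -
    define b where "b = \<alpha> (w$3)"
    have wU: "w \<in> UU k0 L" and eq: "TT k0 n \<alpha> s w = TT k0 n \<alpha> s v" using w by (auto simp: P_def)
    have "rot m b (Yv k0 s w) = rot m a y"
      using eq TT_eq[OF wU nc] TT_eq[OF v nc] by (simp add: b_def a_def y_def)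
    then have "rot m (-b) (rot m b (Yv k0 s w)) = rot m (-b) (rot m a y)" by simp
    then have yw: "Yv k0 s w = rot m (a - b) y" by (simp add: rot_comp[OF m1] rot_zero)
    then show "Yv k0 s w = rot m (a - \<alpha> (w$3)) y" by (simp add: b_def)
    have Sw: "Yv k0 s w \<bullet> Yv k0 s w + 2 * k0 * (Yv k0 s w $ 3) = 0" by (rule S_mem[OF wU s])
    have "Yv k0 s w \<bullet> Yv k0 s w = y \<bullet> y" unfolding yw by (rule rot_norm[OF m1])
    then have "2 * k0 * (Yv k0 s w $ 3) = 2 * k0 * (y $ 3)" using Sw Sy by linarith
    then have "Yv k0 s w $ 3 = y $ 3" using k0 by simp
    moreover have "Yv k0 s w $ 3 = (m$3) * (y \<bullet> m) + (p * cos (a - b) + qq * sin (a - b))"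
    proof -
      have "Yv k0 s w $ 3 = (m$3) * (Yv k0 s w \<bullet> m) + Yv k0 s w \<bullet> UF m" by (rule frame_facts(7)[OF m1])
      also have "\<dots> = (m$3) * (y \<bullet> m) + (p * cos (a - b) + qq * sin (a - b))"
        unfolding yw rot_inner_m[OF m1] rot_inner_U[OF m1] by (simp add: p_def qq_def algebra_simps)
      finally show ?thesis .
    qed
    moreover have "y $ 3 = (m$3) * (y \<bullet> m) + p" using frame_facts(7)[OF m1, of y] by (simp add: p_def)
    ultimately have "p * cos (a - b) + qq * sin (a - b) = p" by simp
    moreover have "b \<in> {0..2*pi}" using arng wU by (auto simp: b_def UU_def)
    ultimately show "\<alpha> (w$3) = a \<or> \<alpha> (w$3) = b2" using sol by (auto simp: b_def)
  qed
  define y2 where "y2 = rot m (a - b2) y"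
  define v2 where "v2 = (vector [y2$1, y2$2, t2] :: real^3)"
  have y2m: "y2 \<bullet> m = y \<bullet> m" unfolding y2_def by (rule rot_inner_m[OF m1])
  have y2U: "y2 \<bullet> UF m = y \<bullet> UF m"
    unfolding y2_def rot_inner_U[OF m1] using sol[of b2] b2 by (simp add: p_def qq_def mult.commute)
  have y23: "y2 $ 3 = y $ 3" by (rule y3[OF y2m y2U])
  have y2n: "y2 \<bullet> y2 = y \<bullet> y" unfolding y2_def by (rule rot_norm[OF m1])
  have sq: "(y2$1)^2 + (y2$2)^2 = (v$1)^2 + (v$2)^2"
    using y2n y23 by (simp add: inner_vec_def sum_3 power2_eq_square y_def Yv_def)
  have v2U: "v2 \<in> UU k0 L" using sq v t2 by (simp add: v2_def UU_def)
  have kap: "kappa k0 (y2$1) (y2$2) = kappa k0 (v$1) (v$2)"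
    unfolding kappa_def using sq by (simp add: algebra_simps)
  have Yv2: "Yv k0 s v2 = y2"
    using y23 kap by (simp add: Yv_def v2_def vec_eq_iff forall_3 y_def)
  have v2P: "v2 \<in> P"
  proof -
    have "TT k0 n \<alpha> s v2 = rot m b2 (rot m (a - b2) y)"
      using TT_eq[OF v2U nc] Yv2 t2 by (simp add: v2_def y2_def)
    also have "\<dots> = TT k0 n \<alpha> s v"
      using TT_eq[OF v nc] by (simp add: rot_comp[OF m1] a_def y_def)
    finally show ?thesis using v2U by (simp add: P_def)
  qed
  have vP: "v \<in> P" using v by (simp add: P_def)
  have ne: "v \<noteq> v2" using t2ne by (auto simp: v2_def)
  have sub: "P \<subseteq> {v, v2}"
  proof
    fix w assume w: "w \<in> P"
    have wU: "w \<in> UU k0 L" using w by (simp add: P_def)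
    have w3: "w$3 \<in> {0..L}" using wU by (simp add: UU_def)
    from pre[OF w] show "w \<in> {v, v2}"
    proof
      assume h: "\<alpha> (w$3) = a"
      then have "w$3 = v$3" using inj[OF w3 vmem] by (simp add: a_def)
      moreover have "Yv k0 s w = y" using pre2[OF w] h by (simp add: rot_zero)
      ultimately have "w = v"
        by (auto simp: vec_eq_iff forall_3 y_def Yv_def)
      then show ?thesis by simp
    next
      assume h: "\<alpha> (w$3) = b2"
      then have "w$3 = t2" using inj[OF w3, of t2] t2 by simp
      moreover have "Yv k0 s w = y2" using pre2[OF w] h by (simp add: y2_def)
      ultimately have "w = v2"
        by (auto simp: vec_eq_iff forall_3 v2_def Yv_def)
      then show ?thesis by simp
    qed
  qed
  have "P = {v, v2}" using sub vP v2P by auto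
  then show ?thesis using ne by (simp add: P_def)
qed


lemma param_diff:
  fixes th :: "real \<times> real \<Rightarrow> real" and G :: "real \<times> real \<Rightarrow> real^3"
  assumes dth: "\<And>p. p \<in> (UNIV::real set) \<times> {0..L} \<Longrightarrow> \<exists>D. (th has_derivative D) (at p within (UNIV::real set) \<times> {0..L})"
  assumes G: "G = (\<lambda>p. (let d = cos (fst p) *\<^sub>R m + (inverse sg * sin (fst p)) *\<^sub>R (cos (th p) *\<^sub>R U + sin (th p) *\<^sub>R W)
               in (let Y = (-2 * k0 * (d \<bullet> axis 3 1)) *\<^sub>R d in
               (Y$1) *\<^sub>R axis 1 1 + (Y$2) *\<^sub>R axis 2 1 + (snd p) *\<^sub>R axis 3 1)))"
  shows "G differentiable_on ((UNIV::real set) \<times> {0..L})"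
  unfolding differentiable_on_def
proof
  fix p assume p: "p \<in> (UNIV::real set) \<times> {0..L}"
  obtain D where D: "(th has_derivative D) (at p within (UNIV::real set) \<times> {0..L})" using dth[OF p] by blast
  have "\<exists>D'. (G has_derivative D') (at p within (UNIV::real set) \<times> {0..L})"
    unfolding G Let_def
    apply (rule exI)
    apply (rule D derivative_intros bounded_linear.has_derivative[OF bounded_linear_vec_nth])+
    done
  then show "G differentiable (at p within (UNIV::real set) \<times> {0..L})" by (auto simp: differentiable_def)
qed



lemma cover_point:
  fixes m y :: "real^3" and sg k0 th :: real
  assumes m1: "(m$1)^2+(m$2)^2+(m$3)^2 = 1" and sgp: "sg > 0" "sg^2 = (m$1)^2 + (m$2)^2"
    and k0: "k0 > 0" and Sy: "y \<bullet> y + 2*k0*(y$3) = 0" and yne: "y \<noteq> 0"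
    and perp: "(y \<bullet> WF m) * cos th = (y \<bullet> UF m) * sin th"
  shows "\<exists>\<psi>. (let d = cos \<psi> *\<^sub>R m + (inverse sg * sin \<psi>) *\<^sub>R (cos th *\<^sub>R UF m + sin th *\<^sub>R WF m)
               in (-2 * k0 * (d \<bullet> axis 3 1)) *\<^sub>R d) = y"
proof -
  define U where "U = UF m"
  define W where "W = WF m"
  define M where "M = cos th *\<^sub>R U + sin th *\<^sub>R W"
  define h where "h = y \<bullet> m"
  define p where "p = y \<bullet> U"
  define q where "q = y \<bullet> W"
  define c where "c = y \<bullet> M"
  have perp': "q * cos th = p * sin th" using perp by (simp add: p_def q_def U_def W_def)
  have c_eq: "c = p * cos th + q * sin th"
    by (simp add: c_def M_def p_def q_def inner_add_right algebra_simps)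
  have sc: "(sin th)^2 + (cos th)^2 = 1" by simp
  have c1: "c * cos th = p" unfolding c_eq using perp' sc by algebra
  have c2: "c * sin th = q" unfolding c_eq using perp' sc by algebra
  have cM: "c *\<^sub>R M = p *\<^sub>R U + q *\<^sub>R W"
  proof -
    have "c *\<^sub>R M = (c * cos th) *\<^sub>R U + (c * sin th) *\<^sub>R W" by (simp add: M_def scaleR_add_right)
    then show ?thesis unfolding c1 c2 .
  qed
  have sg2: "sg^2 \<noteq> 0" using sgp(1) by simp
  have dec: "(sg^2) *\<^sub>R y = (sg^2 * h) *\<^sub>R m + c *\<^sub>R M"
    using decomp[OF m1, of y] unfolding cM by (simp add: sgp(2) h_def U_def W_def p_def q_def)
  have yeq: "y = h *\<^sub>R m + (c / sg^2) *\<^sub>R M"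
  proof -
    have "y = inverse (sg^2) *\<^sub>R ((sg^2) *\<^sub>R y)" using sg2 by simp
    also have "\<dots> = h *\<^sub>R m + (c / sg^2) *\<^sub>R M" unfolding dec using sg2
      by (simp add: scaleR_add_right divide_inverse_commute)
    finally show ?thesis .
  qed
  have ff: "m \<bullet> UF m = 0" "m \<bullet> WF m = 0" "UF m \<bullet> WF m = 0"
    "UF m \<bullet> UF m = (m$1)^2 + (m$2)^2" "WF m \<bullet> WF m = (m$1)^2 + (m$2)^2"
    using frame_facts[OF m1] by auto
  have mm: "m \<bullet> m = 1" using m1 by (simp add: inner_vec_def sum_3 power2_eq_square)
  have mM: "m \<bullet> M = 0" using ff by (simp add: M_def U_def W_def inner_add_right)
  have MM: "M \<bullet> M = sg^2"
  proof -
    have "M \<bullet> M = (cos th)^2 * (U \<bullet> U) + (sin th)^2 * (W \<bullet> W) + 2 * cos th * sin th * (U \<bullet> W)"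
      by (simp add: M_def inner_add_left inner_add_right inner_commute power2_eq_square algebra_simps)
    also have "\<dots> = (cos th)^2 * sg^2 + (sin th)^2 * sg^2" using ff by (simp add: U_def W_def sgp(2))
    finally have "M \<bullet> M = (cos th)^2 * sg^2 + (sin th)^2 * sg^2" .
    then show ?thesis using sin_cos_squared_add[of th] by algebra
  qed
  define r where "r = sqrt (y \<bullet> y)"
  have yy: "y \<bullet> y = h^2 + (c / sg)^2"
  proof -
    have "y \<bullet> y = h^2 * (m \<bullet> m) + 2 * h * (c / sg^2) * (m \<bullet> M) + (c / sg^2)^2 * (M \<bullet> M)"
      by (subst (1 2) yeq) (simp add: inner_add_left inner_add_right inner_commute power2_eq_square algebra_simps)
    also have "\<dots> = h^2 + (c / sg)^2" using sg2 unfolding mm mM MM by (simp add: power2_eq_square field_simps)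
    finally show ?thesis .
  qed
  have rpos: "r > 0" using yne by (simp add: r_def)
  have r2: "r^2 = y \<bullet> y" by (simp add: r_def)
  have "(h / r)^2 + ((c / sg) / r)^2 = (h^2 + (c/sg)^2) / r^2" by (simp add: power_divide add_divide_distrib power_mult_distrib)
  also have "\<dots> = r^2 / r^2" using r2 yy by simp
  also have "\<dots> = 1" using rpos by simp
  finally have "(h / r)^2 + ((c / sg) / r)^2 = 1" .
  then obtain \<psi> where psi: "h / r = cos \<psi>" "(c / sg) / r = sin \<psi>"
    by (rule sincos_total_2pi) blast
  define d where "d = cos \<psi> *\<^sub>R m + (inverse sg * sin \<psi>) *\<^sub>R M"
  have dy: "d = inverse r *\<^sub>R y"
  proof -
    have "d = (h / r) *\<^sub>R m + ((c / sg) / r / sg) *\<^sub>R M" unfolding d_def psi[symmetric]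
      by (simp add: field_simps)
    also have "\<dots> = inverse r *\<^sub>R y" 
      apply (subst yeq) using sgp rpos by (simp add: scaleR_add_right field_simps power2_eq_square)
    finally show ?thesis .
  qed
  have d3: "d \<bullet> axis 3 1 = y$3 / r" by (simp add: dy inner_axis divide_inverse_commute)
  have y3: "y$3 = -(r^2) / (2 * k0)" using Sy r2 k0 by (simp add: field_simps)
  have "(-2 * k0 * (d \<bullet> axis 3 1)) = r" using k0 rpos unfolding d3 y3 by (simp add: field_simps power2_eq_square)
  then have "(-2 * k0 * (d \<bullet> axis 3 1)) *\<^sub>R d = y" using rpos by (simp add: dy)
  then show ?thesis unfolding Let_def d_def M_def U_def W_def by blast
qed



theorem corollary4p3:
  fixes k0 r_s r_M p L :: real
    and f :: "real^3 \<Rightarrow> complex"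
    and \<alpha> \<alpha>' :: "real \<Rightarrow> real"
    and n n' :: "real \<Rightarrow> real^3"
  assumes k0: "k0 > 0"
    and r: "0 < r_s" "r_s < r_M"
    and p: "p > 1"
    and L: "L > 0"
    and f_meas: "f \<in> borel_measurable lebesgue"
    and f_Lp: "integrable lebesgue (\<lambda>x. norm (f x) powr p)"
    and f_supp: "closure {x. f x \<noteq> 0} \<subseteq> ball 0 r_s"
    and \<alpha>_deriv: "\<And>t. t \<in> {0..L} \<Longrightarrow> (\<alpha> has_real_derivative \<alpha>' t) (at t within {0..L})"
    and \<alpha>'_cont: "continuous_on {0..L} \<alpha>'"
    and n_sphere: "\<And>t. t \<in> {0..L} \<Longrightarrow> n t \<in> sphere 0 1"
    and n_deriv: "\<And>t. t \<in> {0..L} \<Longrightarrow> (n has_vector_derivative n' t) (at t within {0..L})"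
    and n'_cont: "continuous_on {0..L} n'"
    and n_const: "\<And>t. t \<in> {0..L} \<Longrightarrow> n' t = 0"
  shows "(\<forall>s \<in> {1, -1}. \<forall>v \<in> UU k0 L.
            \<exists>D. (TT k0 n \<alpha> s has_derivative D) (at v within UU k0 L) \<and>
                \<bar>det (matrix D)\<bar> =
                  k0 * \<bar>\<alpha>' (v$3)\<bar> * \<bar>(n (v$3))$2 * v$1 - (n (v$3))$1 * v$2\<bar>
                  / kappa k0 (v$1) (v$2))
         \<and> ((\<forall>t \<in> {0..L}. n t \<noteq> e3 \<and> n t \<noteq> - e3) \<and> strict_mono_on {0..L} \<alpha>
              \<and> \<alpha> 0 = 0 \<and> \<alpha> L = 2 * pi
            \<longrightarrow> (\<forall>s \<in> {1, -1}. AE v in lebesgue. v \<in> UU k0 L \<longrightarrow>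
                   card {w \<in> UU k0 L. TT k0 n \<alpha> s w = TT k0 n \<alpha> s v} = 2))"
proof -
  obtain m where nc0: "\<And>x. x \<in> {0..L} \<Longrightarrow> n x = m"
    using has_vector_derivative_zero_constant[of "{0..L}" n] n_deriv n_const by (metis convex_real_interval(5))
  have L0: "0 \<in> {0..L}" using L by simp
  have nm: "norm m = 1" using n_sphere[OF L0] nc0[OF L0] by simp
  have m1: "(m$1)^2 + (m$2)^2 + (m$3)^2 = 1" by (rule unit3[OF nm])
  have part1_all: "\<forall>s \<in> {1, -1}. \<forall>v \<in> UU k0 L.
            \<exists>D. (TT k0 n \<alpha> s has_derivative D) (at v within UU k0 L) \<and>
                \<bar>det (matrix D)\<bar> =
                  k0 * \<bar>\<alpha>' (v$3)\<bar> * \<bar>(n (v$3))$2 * v$1 - (n (v$3))$1 * v$2\<bar>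
                  / kappa k0 (v$1) (v$2)"
  proof (intro ballI)
    fix s v assume s: "s \<in> {1, -1::real}" and v: "v \<in> UU k0 L"
    show "\<exists>D. (TT k0 n \<alpha> s has_derivative D) (at v within UU k0 L) \<and>
                \<bar>det (matrix D)\<bar> =
                  k0 * \<bar>\<alpha>' (v$3)\<bar> * \<bar>(n (v$3))$2 * v$1 - (n (v$3))$1 * v$2\<bar>
                  / kappa k0 (v$1) (v$2)"
      by (rule part1[OF k0 s \<alpha>_deriv nc0 nm v])
  qed
  have part2: "\<forall>s \<in> {1, -1}. AE v in lebesgue. v \<in> UU k0 L \<longrightarrow>
                   card {w \<in> UU k0 L. TT k0 n \<alpha> s w = TT k0 n \<alpha> s v} = 2"
    if H: "(\<forall>t \<in> {0..L}. n t \<noteq> e3 \<and> n t \<noteq> - e3)" and mono: "strict_mono_on {0..L} \<alpha>"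
      and a0: "\<alpha> 0 = 0" and aL: "\<alpha> L = 2 * pi"
  proof
    fix s :: real assume s: "s \<in> {1, -1}"
    have cont: "continuous_on {0..L} \<alpha>"
      using \<alpha>_deriv DERIV_continuous continuous_on_eq_continuous_within by blast
    have me: "m \<noteq> e3" "m \<noteq> - e3" using H nc0[OF L0] L0 by auto
    have sg0: "(m$1)^2 + (m$2)^2 \<noteq> 0"
    proof
      assume h: "(m$1)^2 + (m$2)^2 = 0"
      then have z: "m$1 = 0" "m$2 = 0" by (simp_all add: sum_power2_eq_zero_iff)
      then have "(m$3)^2 = 1" using m1 by simp
      then have "m$3 = 1 \<or> m$3 = -1" by (simp add: power2_eq_1_iff)
      then show False using me z by (auto simp: e3_def vec_eq_iff forall_3)
    qed
    define sg where "sg = sqrt ((m$1)^2 + (m$2)^2)"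
    have nn: "0 \<le> (m$1)^2 + (m$2)^2" by simp
    have pos: "0 < (m$1)^2 + (m$2)^2" by (metis nn sg0 le_less)
    have sgp: "sg > 0" "sg^2 = (m$1)^2 + (m$2)^2"
      using pos by (auto simp: sg_def)
    define th where "th = (\<lambda>p::real\<times>real. inverse 2 * \<alpha> (snd p))"
    define G where "G = (\<lambda>p. (let d = cos (fst p) *\<^sub>R m + (inverse sg * sin (fst p)) *\<^sub>R (cos (th p) *\<^sub>R UF m + sin (th p) *\<^sub>R WF m)
               in (let Y = (-2 * k0 * (d \<bullet> axis 3 1)) *\<^sub>R d in
               (Y$1) *\<^sub>R axis 1 1 + (Y$2) *\<^sub>R axis 2 1 + (snd p) *\<^sub>R (axis 3 1 :: real^3))))"
    have dth: "\<exists>D. (th has_derivative D) (at p0 within (UNIV::real set) \<times> {0..L})"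
      if p0: "p0 \<in> (UNIV::real set) \<times> {0..L}" for p0
    proof -
      have 1: "((\<lambda>p::real\<times>real. snd p) has_derivative (\<lambda>h. snd h)) (at p0 within (UNIV::real set) \<times> {0..L})"
        by (rule has_derivative_snd[OF has_derivative_ident])
      have 2: "(\<alpha> has_derivative (\<lambda>x. \<alpha>' (snd p0) * x)) (at (snd p0) within {0..L})"
        using \<alpha>_deriv[of "snd p0"] p0 by (auto simp: has_field_derivative_def)
      have 3: "snd ` ((UNIV::real set) \<times> {0..L}) \<subseteq> {0..L}" by auto
      have 4: "((\<lambda>p. \<alpha> (snd p)) has_derivative (\<lambda>h. \<alpha>' (snd p0) * snd h)) (at p0 within (UNIV::real set) \<times> {0..L})"
        by (rule has_derivative_in_compose[OF 1, of \<alpha>]) (rule has_derivative_subset[OF 2 3])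
      show ?thesis unfolding th_def by (rule exI, rule has_derivative_mult_right[OF 4])
    qed
    have Gdiff: "G differentiable_on ((UNIV::real set) \<times> {0..L})"
      by (rule param_diff[OF dth G_def])
    define N where "N = {x::real^3. axis 3 1 \<bullet> x = 0} \<union> {x. axis 3 1 \<bullet> x = L}
       \<union> {x. vector [m$2, -(m$1), 0] \<bullet> x = 0} \<union> G ` ((UNIV::real set) \<times> {0..L})"
    have wne: "vector [m$2, -(m$1), 0] \<noteq> (0::real^3)"
      using sg0 by (auto simp: vec_eq_iff forall_3)
    have negN: "negligible N"
      unfolding N_def
      by (intro negligible_Un negligible_hyperplane negligible_differentiable_image_lowdim[OF _ Gdiff])
         (auto simp: wne)
    show "AE v in lebesgue. v \<in> UU k0 L \<longrightarrow> card {w \<in> UU k0 L. TT k0 n \<alpha> s w = TT k0 n \<alpha> s v} = 2"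
    proof (rule AE_I')
      show "N \<in> null_sets lebesgue" using negN negligible_iff_null_sets by blast
      show "{x \<in> space lebesgue. \<not> (x \<in> UU k0 L \<longrightarrow> card {w \<in> UU k0 L. TT k0 n \<alpha> s w = TT k0 n \<alpha> s x} = 2)} \<subseteq> N"
      proof (rule subsetI, rule ccontr)
        fix v assume vin: "v \<in> {x \<in> space lebesgue. \<not> (x \<in> UU k0 L \<longrightarrow> card {w \<in> UU k0 L. TT k0 n \<alpha> s w = TT k0 n \<alpha> s x} = 2)}"
          and vN: "v \<notin> N"
        have v: "v \<in> UU k0 L" and cne: "card {w \<in> UU k0 L. TT k0 n \<alpha> s w = TT k0 n \<alpha> s v} \<noteq> 2"
          using vin by auto
        have vt: "0 < v$3" "v$3 < L" using v vN by (auto simp: UU_def N_def inner_axis' less_le)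
        have qv: "Yv k0 s v \<bullet> WF m = m$2 * v$1 - m$1 * v$2"
          using frame_facts(6)[OF m1, of "Yv k0 s v"] by (simp add: Yv_comp)
        have q: "Yv k0 s v \<bullet> WF m \<noteq> 0"
          using vN unfolding qv by (auto simp: N_def inner_vec_def sum_3)
        have nb: "(Yv k0 s v \<bullet> UF m) * (cos (\<alpha> (v$3)) - 1) + (Yv k0 s v \<bullet> WF m) * sin (\<alpha> (v$3)) \<noteq> 0"
        proof
          assume nb0: "(Yv k0 s v \<bullet> UF m) * (cos (\<alpha> (v$3)) - 1) + (Yv k0 s v \<bullet> WF m) * sin (\<alpha> (v$3)) = 0"
          define y where "y = Yv k0 s v"
          define t where "t = \<alpha> (v$3) / 2"
          have vmem: "v$3 \<in> {0..L}" using vt by auto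
          have a_rng: "0 < \<alpha> (v$3)" "\<alpha> (v$3) < 2*pi"
            using strict_mono_onD[OF mono, of 0 "v$3"] strict_mono_onD[OF mono, of "v$3" L] vt a0 aL by auto
          have tr: "0 < t" "t < pi" using a_rng by (auto simp: t_def)
          have st: "sin t \<noteq> 0" using sin_gt_zero[OF tr] by simp
          have e: "2 * t = \<alpha> (v$3)" by (simp add: t_def)
          have h: "(y \<bullet> UF m) * cos (\<alpha> (v$3)) + (y \<bullet> WF m) * sin (\<alpha> (v$3)) - (y \<bullet> UF m)
               = 2 * sin t * ((y \<bullet> WF m) * cos t - (y \<bullet> UF m) * sin t)"
            using half_identity[where p="y \<bullet> UF m" and q="y \<bullet> WF m" and th=t] unfolding e .
          have z: "(y \<bullet> UF m) * cos (\<alpha> (v$3)) + (y \<bullet> WF m) * sin (\<alpha> (v$3)) - (y \<bullet> UF m) = 0"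
            using nb0 by (simp add: y_def algebra_simps)
          have "2 * sin t * ((y \<bullet> WF m) * cos t - (y \<bullet> UF m) * sin t) = 0" using h z by linarith
          then have "(y \<bullet> WF m) * cos t - (y \<bullet> UF m) * sin t = 0" using st by simp
          then have perp: "(y \<bullet> WF m) * cos t = (y \<bullet> UF m) * sin t" by simp
          have Sy: "y \<bullet> y + 2*k0*(y$3) = 0" unfolding y_def by (rule S_mem[OF v s])
          have yne: "y \<noteq> 0" using q by (auto simp: y_def)
          obtain \<psi> where psi: "(let d = cos \<psi> *\<^sub>R m + (inverse sg * sin \<psi>) *\<^sub>R (cos t *\<^sub>R UF m + sin t *\<^sub>R WF m)
               in (-2 * k0 * (d \<bullet> axis 3 1)) *\<^sub>R d) = y"
            using cover_point[OF m1 sgp k0 Sy yne perp] by blast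
          have thv: "th (\<psi>, v$3) = t" by (simp add: th_def t_def)
          have "G (\<psi>, v$3) = (y$1) *\<^sub>R axis 1 1 + (y$2) *\<^sub>R axis 2 1 + (v$3) *\<^sub>R (axis 3 1 :: real^3)"
          proof -
            have psi': "(-2 * k0 * ((cos \<psi> *\<^sub>R m + (inverse sg * sin \<psi>) *\<^sub>R (cos t *\<^sub>R UF m + sin t *\<^sub>R WF m)) \<bullet> axis 3 1)) *\<^sub>R
               (cos \<psi> *\<^sub>R m + (inverse sg * sin \<psi>) *\<^sub>R (cos t *\<^sub>R UF m + sin t *\<^sub>R WF m)) = y"
              using psi by (simp only: Let_def)
            show ?thesis unfolding G_def by (simp only: Let_def fst_conv snd_conv thv psi')
          qed
          also have "\<dots> = v" unfolding Y_eq[symmetric] by (simp add: y_def Yv_comp vec_eq_iff forall_3 vector_3)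
          finally have "v \<in> G ` ((UNIV::real set) \<times> {0..L})" using vmem by (metis SigmaI UNIV_I image_eqI)
          then show False using vN by (simp add: N_def)
        qed
        have "card {w \<in> UU k0 L. TT k0 n \<alpha> s w = TT k0 n \<alpha> s v} = 2"
          by (rule card_good[OF m1 sg0 k0 s nc0 mono a0 aL cont v vt q nb])
        then show False using cne by simp
      qed
    qed
  qed
  show ?thesis using part1_all part2 by blast
qed

end
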